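(* Consider the compound Burgers-Korteweg-de Vries equation $$u_t + \alpha u u_x + \beta u^2 u_x + \mu u_{xx} + s u_{xxx} = 0,$$ with real constants $\alpha>0$, $\mu>0$, $s>0$ and $\beta<0$ (so $-s\beta>0$). Let $\varepsilon_1,\varepsilon_2,\varepsilon_3,\varepsilon\in\{1,-1\}$ satisfy the constraint $\varepsilon_1\varepsilon_2\varepsilon_3=1$, and set $$\kappa=\varepsilon_1\,\frac{\alpha}{2|\beta|}\sqrt{\frac{|\beta|}{6s}}-\varepsilon_2\,\frac{\mu}{6s}.$$ Define $$B_0=-\frac{\alpha}{2\beta}-\varepsilon_3\sqrt{\frac{6s}{|\beta|}}\,\frac{\mu}{6s},\qquad B_1=\varepsilon_3\sqrt{\frac{6s}{|\beta|}}\,\kappa,\qquad C_1=2\kappa,$$ $$D_1=i\,\varepsilon\left(\frac{\alpha}{2|\beta|}-\varepsilon_3\,\frac{\mu}{6s}\sqrt{\frac{6s}{|\beta|}}\right),\qquad v=-\frac{\mu^2}{6s}-2s\left[\frac{\alpha}{2|\beta|}\sqrt{\frac{|\beta|}{6s}}-\varepsilon_3\frac{\mu}{6s}\right]^2-\frac{\alpha^2}{4\beta}.$$ Then, for arbitrary $x_0$, $$u(x,t)=B_0+B_1\tanh\big[C_1(x-vt+x_0)\big]+D_1\,\mathrm{sech}\big[C_1(x-vt+x_0)\big]$$ is a (complex) traveling solitary wave solution of the equation, whose real part has a kink profile and whose imaginary part has a bell profile; moreover $B_1^2=-D_1^2$, so that $|B_1|=|D_1|$ (with $D_1$ purely ima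ginary).
   Context: Traveling waves $u(x,t)=u(\xi)$, $\xi=x-vt$, of the equation satisfy (after one integration with zero integration constant) $u''+ru'+au^3+bu^2+cu=0$ with $r=\mu/s$, $a=\beta/(3s)$, $b=\alpha/(2s)$, $c=-v/s$. The solution is sought via the hyperbolic ansatz $u=B_0+B_1\tanh[C_1(x-vt+x_0)]+D_1\,\mathrm{sech}[C_1(x-vt+x_0)]$, whose constants are obtained by substituting into the ODE, writing everything in exponentials $e^{kC_1\xi}$, and equating the coefficients of $e^{kC_1\xi}$, $k=0,\dots,6$, to zero (the only other solutions of that algebraic system have $B_1=D_1=0$, i.e. constant solutions). *)

theory Defs
  imports "HOL-Analysis.Analysis"
begin

definition sech :: "real \<Rightarrow> real" where
  "sech z = 1 / cosh z"

definition cBKdV_solution ::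
  "real \<Rightarrow> real \<Rightarrow> real \<Rightarrow> real \<Rightarrow> (real \<Rightarrow> real \<Rightarrow> complex) \<Rightarrow> bool" where
  "cBKdV_solution \<alpha> \<beta> \<mu> s u \<longleftrightarrow>
     (\<exists>ux uxx uxxx ut :: real \<Rightarrow> real \<Rightarrow> complex.
        \<forall>x t.
          ((\<lambda>y. u y t) has_vector_derivative ux x t) (at x) \<and>
          ((\<lambda>y. ux y t) has_vector_derivative uxx x t) (at x) \<and>
          ((\<lambda>y. uxx y t) has_vector_derivative uxxx x t) (at x) \<and>
          ((\<lambda>\<tau>. u x \<tau>) has_vector_derivative ut x t) (at t) \<and>
          ut x t + of_real \<alpha> * u x t * ux x t + of_real \<beta> * (u x t)\<^sup>2 * ux x t
            + of_real \<mu> * uxx x t + of_real s * uxxx x t = 0)"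

end

theory Submission
  imports Defs
begin

lemma tanh_sech_sq: "(tanh z)\<^sup>2 + (sech z)\<^sup>2 = (1::real)"
proof -
  have "cosh z ^ 2 = sinh z ^ 2 + 1" by (rule cosh_square_eq)
  moreover have "sinh z ^ 2 + 1 \<noteq> 0" by (smt (verit) zero_le_power2)
  ultimately show ?thesis
    by (simp add: tanh_def sech_def power_divide add_divide_distrib[symmetric])
qed

lemma Phi_deriv:
  fixes \<sigma> \<epsilon> z :: real
  assumes "\<sigma> * \<sigma> = 1" "\<epsilon> * \<epsilon> = 1"
  shows "((\<lambda>z. complex_of_real (\<sigma> * tanh z) + \<i> * complex_of_real (\<epsilon> * sech z))
     has_vector_derivative
      (complex_of_real \<sigma> / 2 * (1 - (complex_of_real (\<sigma> * tanh z) + \<i> * complex_of_real (\<epsilon> * sech z))\<^sup>2))) (at z)"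
proof -
  have d1: "((\<lambda>z. \<sigma> * tanh z) has_real_derivative \<sigma> * (1 - tanh z ^ 2)) (at z)"
    by (auto intro!: derivative_eq_intros)
  have d2: "((\<lambda>z. \<epsilon> * sech z) has_real_derivative - \<epsilon> * tanh z * sech z) (at z)"
    unfolding sech_def
    by (auto intro!: derivative_eq_intros simp: tanh_def power2_eq_square field_simps)
  have D: "((\<lambda>z. complex_of_real (\<sigma> * tanh z) + \<i> * complex_of_real (\<epsilon> * sech z))
     has_vector_derivative
      (complex_of_real (\<sigma> * (1 - tanh z ^ 2)) + \<i> * complex_of_real (- \<epsilon> * tanh z * sech z))) (at z)"
    by (intro has_vector_derivative_add has_vector_derivative_mult_right has_vector_derivative_of_real d1 d2)
  have E: "complex_of_real (\<sigma> * (1 - tanh z ^ 2)) + \<i> * complex_of_real (- \<epsilon> * tanh z * sech z)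
     = complex_of_real \<sigma> / 2 * (1 - (complex_of_real (\<sigma> * tanh z) + \<i> * complex_of_real (\<epsilon> * sech z))\<^sup>2)"
  proof -
    have t: "(tanh z)\<^sup>2 = 1 - (sech z)\<^sup>2" using tanh_sech_sq[of z] by simp
    show ?thesis
      apply (simp add: complex_eq_iff power2_eq_square algebra_simps)
      using assms tanh_sech_sq[of z] by (simp add: power2_eq_square) algebra
  qed
  show ?thesis using D unfolding E .
qed


lemma chainP:
  fixes h :: "real \<Rightarrow> complex"
  assumes "(h has_vector_derivative D) (at y)" "(P has_field_derivative P') (at (h y))" "D * P' = E"
  shows "((\<lambda>y. P (h y)) has_vector_derivative E) (at y)"
  using field_vector_diff_chain_at[OF assms(1,2)] assms(3) by (simp add: o_def)

lemma lin_chain: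
  fixes \<Phi> :: "real \<Rightarrow> complex"
  assumes "\<And>z. (\<Phi> has_vector_derivative \<Phi>' z) (at z)"
  shows "((\<lambda>y. \<Phi> (c * y + d)) has_vector_derivative complex_of_real c * \<Phi>' (c * y + d)) (at y)"
proof -
  have f: "((\<lambda>y. c * y + d) has_vector_derivative c) (at y)"
    unfolding has_real_derivative_iff_has_vector_derivative[symmetric]
    by (auto intro!: derivative_eq_intros)
  show ?thesis
    using vector_diff_chain_at[OF f assms[of "c * y + d"]]
    by (simp add: o_def scaleR_conv_of_real)
qed

lemma poly_id:
  fixes A Bt M S V W L Y :: complex
  shows "(-V*W*L*(1-Y^2)) + A*(W*(1+Y))*(W*L*(1-Y^2)) + Bt*(W*(1+Y))^2*(W*L*(1-Y^2))
     + M*(-2*W*L^2*Y*(1-Y^2)) + S*(-2*W*L^3*(1-Y^2)*(1-3*Y^2))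
   = W*L*(1-Y^2)*((-V + A*W + Bt*W^2 - 2*S*L^2) + (A*W + 2*Bt*W^2 - 2*M*L)*Y + (Bt*W^2 + 6*S*L^2)*Y^2)"
  by algebra

theorem mainTheorem1:
  fixes \<alpha> \<beta> \<mu> s \<epsilon>1 \<epsilon>2 \<epsilon>3 \<epsilon> x0 \<kappa> B0 B1 C1 v :: real
    and D1 :: complex and u :: "real \<Rightarrow> real \<Rightarrow> complex"
  assumes "\<alpha> > 0" and "\<mu> > 0" and "s > 0" and "\<beta> < 0"
    and "\<epsilon>1 \<in> {1, -1}" and "\<epsilon>2 \<in> {1, -1}" and "\<epsilon>3 \<in> {1, -1}" and "\<epsilon> \<in> {1, -1}"
    and "\<epsilon>1 * \<epsilon>2 * \<epsilon>3 = 1"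
  defines "\<kappa> \<equiv> \<epsilon>1 * (\<alpha> / (2 * \<bar>\<beta>\<bar>)) * sqrt (\<bar>\<beta>\<bar> / (6 * s)) - \<epsilon>2 * (\<mu> / (6 * s))"
    and "B0 \<equiv> - \<alpha> / (2 * \<beta>) - \<epsilon>3 * sqrt (6 * s / \<bar>\<beta>\<bar>) * (\<mu> / (6 * s))"
    and "B1 \<equiv> \<epsilon>3 * sqrt (6 * s / \<bar>\<beta>\<bar>) * \<kappa>"
    and "C1 \<equiv> 2 * \<kappa>"
    and "D1 \<equiv> \<i> * of_real (\<epsilon> * (\<alpha> / (2 * \<bar>\<beta>\<bar>) - \<epsilon>3 * (\<mu> / (6 * s)) * sqrt (6 * s / \<bar>\<beta>\<bar>)))"
    and "v \<equiv> - \<mu>\<^sup>2 / (6 * s)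
             - 2 * s * (\<alpha> / (2 * \<bar>\<beta>\<bar>) * sqrt (\<bar>\<beta>\<bar> / (6 * s)) - \<epsilon>3 * (\<mu> / (6 * s)))\<^sup>2
             - \<alpha>\<^sup>2 / (4 * \<beta>)"
    and "u \<equiv> (\<lambda>x t. of_real B0 + of_real B1 * of_real (tanh (C1 * (x - v * t + x0)))
                      + D1 * of_real (sech (C1 * (x - v * t + x0))))"
  shows "cBKdV_solution \<alpha> \<beta> \<mu> s u
    \<and> (\<forall>x t. Re (u x t) = B0 + B1 * tanh (C1 * (x - v * t + x0)))
    \<and> (\<forall>x t. Im (u x t) = Im D1 * sech (C1 * (x - v * t + x0)))
    \<and> Re D1 = 0
    \<and> (complex_of_real B1)\<^sup>2 = - D1\<^sup>2
    \<and> \<bar>B1\<bar> = cmod D1"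
  proof -
  define b where "b = - \<beta>"
  have b: "b > 0" "\<bar>\<beta>\<bar> = b" "\<beta> = - b" using assms(4) by (auto simp: b_def)
  define q where "q = sqrt (6 * s / b)"
  have q: "q > 0" using b assms(3) by (simp add: q_def)
  have qq: "q * q = 6 * s / b" using b assms(3) by (simp add: q_def)
  have bq: "b = 6 * s / (q * q)" using qq q b by (simp add: field_simps)
  have sq2: "sqrt (\<bar>\<beta>\<bar> / (6 * s)) = 1 / q"
    using b by (simp add: q_def real_sqrt_divide)
  define a where "a = \<alpha> / (2 * b)"
  define m where "m = \<mu> / (6 * s)"
  define w where "w = a - \<epsilon>3 * m * q"
  define \<sigma> where "\<sigma> = \<epsilon>1 * \<epsilon>3"
  define lam where "lam = \<epsilon>3 * w / q"
  have e1: "\<epsilon>1 * \<epsilon>1 = 1" and e3: "\<epsilon>3 * \<epsilon>3 = 1" and e: "\<epsilon> * \<epsilon> = 1"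
    using assms(5,7,8) by auto
  have e2: "\<epsilon>2 = \<epsilon>1 * \<epsilon>3" using assms(5,6,7,9) by auto
  have sig: "\<sigma> * \<sigma> = 1" using e1 e3 by (simp add: \<sigma>_def algebra_simps)
  have \<alpha>eq: "\<alpha> = 2 * a * b" using b by (simp add: a_def)
  have \<mu>eq: "\<mu> = 6 * s * m" using assms(3) by (simp add: m_def)
  have \<kappa>eq: "\<kappa> = \<epsilon>1 * w / q"
    unfolding \<kappa>_def sq2 e2 w_def using q e1
    by (simp add: a_def m_def field_simps b(2))
  have B0eq: "B0 = w"
    unfolding B0_def w_def a_def m_def q_def using b by (simp add: algebra_simps)
  have B1eq: "B1 = \<sigma> * w"
    unfolding B1_def \<kappa>eq \<sigma>_def using q by (simp add: q_def[symmetric] b(2))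
  have D1eq: "D1 = \<i> * complex_of_real (\<epsilon> * w)"
    unfolding D1_def w_def a_def m_def q_def b(2) by (simp add: algebra_simps)
  have C1eq: "C1 = 2 * \<epsilon>1 * w / q" unfolding C1_def \<kappa>eq by simp
  have lam: "C1 * \<sigma> / 2 = lam"
    unfolding C1eq lam_def \<sigma>_def using e1 q by (simp add: field_simps)
  have veq: "v = - \<mu>\<^sup>2 / (6 * s) - 2 * s * (a / q - \<epsilon>3 * m)\<^sup>2 + \<alpha>\<^sup>2 / (4 * b)"
    unfolding v_def sq2 a_def m_def using b by simp
  have c2: "\<beta> * w\<^sup>2 + 6 * s * lam\<^sup>2 = 0"
  proof -
    have "6 * s * lam\<^sup>2 = w\<^sup>2 * (6 * s / (q * q))"
      unfolding lam_def using q e3 by (simp add: field_simps power2_eq_square)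
    then show ?thesis unfolding b(3) bq by simp
  qed
  have c1: "\<alpha> * w + 2 * \<beta> * w\<^sup>2 - 2 * \<mu> * lam = 0"
  proof -
    have "\<alpha> * w + 2 * \<beta> * w\<^sup>2 - 2 * \<mu> * lam = 2 * b * w * (a - w) - 12 * s * m * \<epsilon>3 * w / q"
      unfolding \<alpha>eq b(3) \<mu>eq lam_def by (simp add: power2_eq_square algebra_simps)
    also have "\<dots> = 12 * s * w / (q * q) * (a - w - \<epsilon>3 * m * q)"
      unfolding bq using q by (simp add: field_simps)
    also have "\<dots> = 0" unfolding w_def by simp
    finally show ?thesis .
  qed
  have c0: "- v + \<alpha> * w + \<beta> * w\<^sup>2 - 2 * s * lam\<^sup>2 = 0"
  proof -
    have "- v + \<alpha> * w + \<beta> * w\<^sup>2 - 2 * s * lam\<^sup>2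
       = 6 * s * m\<^sup>2 + 2 * s * (a / q - \<epsilon>3 * m)\<^sup>2 - a * a * b + 2 * a * b * w - b * w\<^sup>2
         - 2 * s * w\<^sup>2 / (q * q)"
      unfolding veq \<alpha>eq b(3) \<mu>eq lam_def using b assms(3) q e3
      by (simp add: power2_eq_square field_simps)
    also have "\<dots> = 6 * s / (q * q) * ((m * q)\<^sup>2 - (a - w)\<^sup>2)
         + 2 * s / (q * q) * ((a - \<epsilon>3 * m * q)\<^sup>2 - w\<^sup>2)"
      unfolding bq using q by (simp add: field_simps power2_eq_square)
    also have "\<dots> = 0" unfolding w_def using e3
      by (simp add: power2_eq_square algebra_simps)
    finally show ?thesis .
  qed
  define \<Phi> where "\<Phi> z = complex_of_real (\<sigma> * tanh z) + \<i> * complex_of_real (\<epsilon> * sech z)" for z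
  define \<Psi> where "\<Psi> x t = \<Phi> (C1 * (x - v * t + x0))" for x t
  have \<Phi>d: "(\<Phi> has_vector_derivative complex_of_real \<sigma> / 2 * (1 - (\<Phi> z)\<^sup>2)) (at z)" for z
    unfolding \<Phi>_def using Phi_deriv[OF sig e] .
  have uform: "u x t = complex_of_real w * (1 + \<Psi> x t)" for x t
    unfolding u_def \<Psi>_def \<Phi>_def B0eq B1eq D1eq by (simp add: algebra_simps)
  have lamc: "complex_of_real c * (complex_of_real \<sigma> / 2 * X) = complex_of_real (c * \<sigma> / 2) * X" for c X
    by simp
  have \<Psi>x: "((\<lambda>y. \<Psi> y t) has_vector_derivative complex_of_real lam * (1 - (\<Psi> x t)\<^sup>2)) (at x)" for x t
  proof -
    have D: "((\<lambda>y. \<Phi> (C1 * y + C1 * (x0 - v * t))) has_vector_derivative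
        complex_of_real C1 * (complex_of_real \<sigma> / 2 * (1 - (\<Phi> (C1 * x + C1 * (x0 - v * t)))\<^sup>2))) (at x)"
      by (rule lin_chain[OF \<Phi>d])
    have f: "(\<lambda>y. \<Phi> (C1 * y + C1 * (x0 - v * t))) = (\<lambda>y. \<Psi> y t)"
      unfolding \<Psi>_def by (simp add: algebra_simps)
    have p: "\<Phi> (C1 * x + C1 * (x0 - v * t)) = \<Psi> x t"
      unfolding \<Psi>_def by (simp add: algebra_simps)
    show ?thesis using D unfolding f p lamc lam .
  qed
  have \<Psi>t: "((\<lambda>\<tau>. \<Psi> x \<tau>) has_vector_derivative complex_of_real (- v * lam) * (1 - (\<Psi> x t)\<^sup>2)) (at t)" for x t
  proof -
    have D: "((\<lambda>\<tau>. \<Phi> ((- v * C1) * \<tau> + C1 * (x + x0))) has_vector_derivative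
        complex_of_real (- v * C1) * (complex_of_real \<sigma> / 2 * (1 - (\<Phi> ((- v * C1) * t + C1 * (x + x0)))\<^sup>2))) (at t)"
      by (rule lin_chain[OF \<Phi>d])
    have f: "(\<lambda>\<tau>. \<Phi> ((- v * C1) * \<tau> + C1 * (x + x0))) = (\<lambda>\<tau>. \<Psi> x \<tau>)"
      unfolding \<Psi>_def by (simp add: algebra_simps)
    have p: "\<Phi> ((- v * C1) * t + C1 * (x + x0)) = \<Psi> x t"
      unfolding \<Psi>_def by (simp add: algebra_simps)
    have l: "(- v * C1) * \<sigma> / 2 = - v * lam" using lam by (simp add: algebra_simps)
    show ?thesis using D unfolding f p lamc l .
  qed
  define W where "W = complex_of_real w"
  define L where "L = complex_of_real lam"
  define ux where "ux x t = W * L * (1 - (\<Psi> x t)\<^sup>2)" for x t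
  define uxx where "uxx x t = -2 * W * L^2 * \<Psi> x t * (1 - (\<Psi> x t)\<^sup>2)" for x t
  define uxxx where "uxxx x t = -2 * W * L^3 * (1 - (\<Psi> x t)\<^sup>2) * (1 - 3 * (\<Psi> x t)\<^sup>2)" for x t
  define ut where "ut x t = - complex_of_real v * W * L * (1 - (\<Psi> x t)\<^sup>2)" for x t
  have sol: "cBKdV_solution \<alpha> \<beta> \<mu> s u"
    unfolding cBKdV_solution_def
  proof (intro exI allI conjI)
    fix x t
    show "((\<lambda>y. u y t) has_vector_derivative ux x t) (at x)"
      unfolding uform ux_def W_def[symmetric]
      by (rule chainP[OF \<Psi>x, where P = "\<lambda>z. W * (1 + z)"])
        (auto intro!: derivative_eq_intros simp: W_def L_def)
    show "((\<lambda>y. ux y t) has_vector_derivative uxx x t) (at x)"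
      unfolding ux_def uxx_def
      by (rule chainP[OF \<Psi>x, where P = "\<lambda>z. W * L * (1 - z\<^sup>2)"])
        (auto intro!: derivative_eq_intros simp: W_def L_def power2_eq_square algebra_simps)
    show "((\<lambda>y. uxx y t) has_vector_derivative uxxx x t) (at x)"
      unfolding uxx_def uxxx_def
      by (rule chainP[OF \<Psi>x, where P = "\<lambda>z. -2 * W * L^2 * z * (1 - z\<^sup>2)"])
        (auto intro!: derivative_eq_intros simp: W_def L_def power2_eq_square power3_eq_cube algebra_simps)
    show "((\<lambda>\<tau>. u x \<tau>) has_vector_derivative ut x t) (at t)"
      unfolding uform ut_def W_def[symmetric]
      by (rule chainP[OF \<Psi>t, where P = "\<lambda>z. W * (1 + z)"])
        (auto intro!: derivative_eq_intros simp: W_def L_def)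
    have C0: "- complex_of_real v + complex_of_real \<alpha> * W + complex_of_real \<beta> * W\<^sup>2 - 2 * complex_of_real s * L\<^sup>2 = 0"
      using arg_cong[OF c0, of complex_of_real] by (simp add: W_def L_def)
    have C1': "complex_of_real \<alpha> * W + 2 * complex_of_real \<beta> * W\<^sup>2 - 2 * complex_of_real \<mu> * L = 0"
      using arg_cong[OF c1, of complex_of_real] by (simp add: W_def L_def)
    have C2: "complex_of_real \<beta> * W\<^sup>2 + 6 * complex_of_real s * L\<^sup>2 = 0"
      using arg_cong[OF c2, of complex_of_real] by (simp add: W_def L_def)
    show "ut x t + complex_of_real \<alpha> * u x t * ux x t + complex_of_real \<beta> * (u x t)\<^sup>2 * ux x t
            + complex_of_real \<mu> * uxx x t + complex_of_real s * uxxx x t = 0"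
      unfolding ut_def ux_def uxx_def uxxx_def uform W_def[symmetric]
      using poly_id[of "complex_of_real v" W L "\<Psi> x t" "complex_of_real \<alpha>" "complex_of_real \<beta>"
          "complex_of_real \<mu>" "complex_of_real s"] C0 C1' C2
      by (simp add: mult.assoc)
  qed
  show ?thesis
  proof (intro conjI allI)
    show "cBKdV_solution \<alpha> \<beta> \<mu> s u" by (rule sol)
  next
    fix x t show "Re (u x t) = B0 + B1 * tanh (C1 * (x - v * t + x0))"
      unfolding u_def D1eq by simp
  next
    fix x t show "Im (u x t) = Im D1 * sech (C1 * (x - v * t + x0))"
      unfolding u_def D1eq by simp
  next
    show "Re D1 = 0" unfolding D1eq by simp
  next
    show "(complex_of_real B1)\<^sup>2 = - D1\<^sup>2"
      unfolding B1eq D1eq using sig e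
      by (simp add: power2_eq_square algebra_simps flip: of_real_mult)
  next
    have "\<bar>\<sigma>\<bar> = 1" "\<bar>\<epsilon>\<bar> = 1" using assms(5,7,8) by (auto simp: \<sigma>_def)
    then show "\<bar>B1\<bar> = cmod D1"
      unfolding B1eq D1eq by (simp add: abs_mult norm_mult)
  qed
qed

end
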